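(* If a complete edge-colored graph $G=(V,E_1,\dots,E_k)$ contains a rainbow triangle, then $G$ is not a complete edge-colored permutation graph.
   Context: A complete $k$-edge-colored graph $G=(V,E_1,\dots,E_k)$ is the complete graph on a finite set $V$ whose edges are partitioned into $k$ nonempty color classes $E_i$; $G_{|i}=(V,E_i)$. A rainbow triangle is a set of three vertices whose three edges have pairwise distinct colors. A labeling is a bijection $\ell:V\to\{1,\dots,|V|\}$. A graph $(V,E)$ with labeling $\ell$ is a simple permutation graph of a permutation $\pi$ of $\{1,\dots,|V|\}$ if for all $u,v$ with $\ell(u)>\ell(v)$: $\{u,v\}\in E$ iff $\pi^{-1}(\ell(u))<\pi^{-1}(\ell(v))$. $G$ is a complete edge-colored permutation graph if there exist a labeling $\ell$ and permutations $\pi_1,\dots,\pi_k$ with $(G_{|i},\ell)$ a simple permutation graph of $\pi_i$ for all $i$. *)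

theory Defs
  imports Main "HOL-Combinatorics.Permutations"
begin

definition all_edges :: "'a set \<Rightarrow> 'a set set" where
  "all_edges V = {e. \<exists>u v. u \<in> V \<and> v \<in> V \<and> u \<noteq> v \<and> e = {u, v}}"

definition complete_edge_colored :: "'a set \<Rightarrow> nat \<Rightarrow> (nat \<Rightarrow> 'a set set) \<Rightarrow> bool" where
  "complete_edge_colored V k E \<longleftrightarrow>
     finite V \<and>
     (\<forall>i\<in>{1..k}. E i \<noteq> {} \<and> E i \<subseteq> all_edges V) \<and>
     (\<forall>i\<in>{1..k}. \<forall>j\<in>{1..k}. i \<noteq> j \<longrightarrow> E i \<inter> E j = {}) \<and>
     (\<Union>i\<in>{1..k}. E i) = all_edges V"

definition has_rainbow_triangle :: "'a set \<Rightarrow> nat \<Rightarrow> (nat \<Rightarrow> 'a set set) \<Rightarrow> bool" where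
  "has_rainbow_triangle V k E \<longleftrightarrow>
     (\<exists>x\<in>V. \<exists>y\<in>V. \<exists>z\<in>V. x \<noteq> y \<and> y \<noteq> z \<and> x \<noteq> z \<and>
       (\<exists>a\<in>{1..k}. \<exists>b\<in>{1..k}. \<exists>c\<in>{1..k}. a \<noteq> b \<and> b \<noteq> c \<and> a \<noteq> c \<and>
          {x, y} \<in> E a \<and> {y, z} \<in> E b \<and> {x, z} \<in> E c))"

definition labeling :: "'a set \<Rightarrow> ('a \<Rightarrow> nat) \<Rightarrow> bool" where
  "labeling V l \<longleftrightarrow> bij_betw l V {1..card V}"

definition simple_perm_graph :: "'a set \<Rightarrow> 'a set set \<Rightarrow> ('a \<Rightarrow> nat) \<Rightarrow> (nat \<Rightarrow> nat) \<Rightarrow> bool" where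
  "simple_perm_graph V F l \<pi> \<longleftrightarrow>
     \<pi> permutes {1..card V} \<and>
     (\<forall>u\<in>V. \<forall>v\<in>V. l u > l v \<longrightarrow> ({u, v} \<in> F \<longleftrightarrow> inv \<pi> (l u) < inv \<pi> (l v)))"

definition complete_edge_colored_perm_graph :: "'a set \<Rightarrow> nat \<Rightarrow> (nat \<Rightarrow> 'a set set) \<Rightarrow> bool" where
  "complete_edge_colored_perm_graph V k E \<longleftrightarrow>
     complete_edge_colored V k E \<and>
     (\<exists>l. labeling V l \<and> (\<exists>\<pi>. \<forall>i\<in>{1..k}. simple_perm_graph V (E i) l (\<pi> i)))"

end

theory Submission
  imports Defs
begin

lemma core:
  assumes "simple_perm_graph V F l \<pi>" "u \<in> V" "v \<in> V" "w \<in> V"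
    "l u < l v" "l v < l w" "{u,w} \<in> F" "{u,v} \<notin> F" "{v,w} \<notin> F"
  shows False
proof -
  have h: "\<forall>u\<in>V. \<forall>v\<in>V. l u > l v \<longrightarrow> ({u, v} \<in> F \<longleftrightarrow> inv \<pi> (l u) < inv \<pi> (l v))"
    using assms(1) unfolding simple_perm_graph_def by blast
  have 1: "inv \<pi> (l w) < inv \<pi> (l u)" using h assms by (metis insert_commute less_trans)
  have 2: "\<not> inv \<pi> (l v) < inv \<pi> (l u)" using h assms by (metis insert_commute)
  have 3: "\<not> inv \<pi> (l w) < inv \<pi> (l v)" using h assms by (metis insert_commute)
  show False using 1 2 3 by linarith
qed

lemma core2:
  assumes "\<And>i. i \<in> {1..k} \<Longrightarrow> simple_perm_graph V (E i) l (\<pi> i)"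
    "\<forall>i\<in>{1..k}. \<forall>j\<in>{1..k}. i \<noteq> j \<longrightarrow> E i \<inter> E j = {}"
    "u \<in> V" "v \<in> V" "w \<in> V" "l u < l v" "l v < l w"
    "a \<in> {1..k}" "b \<in> {1..k}" "c \<in> {1..k}" "a \<noteq> b" "a \<noteq> c"
    "{u,w} \<in> E a" "{u,v} \<in> E b" "{v,w} \<in> E c"
  shows False
proof -
  have "{u,v} \<notin> E a" using assms by blast
  moreover have "{v,w} \<notin> E a" using assms by blast
  ultimately show False using core[OF assms(1)[OF assms(8)]] assms by blast
qed

theorem lemma3p10:
  fixes V :: "'a set" and k :: nat and E :: "nat \<Rightarrow> 'a set set"
  assumes "complete_edge_colored V k E"
    and "has_rainbow_triangle V k E"
  shows "\<not> complete_edge_colored_perm_graph V k E"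
proof
  assume "complete_edge_colored_perm_graph V k E"
  then obtain l \<pi> where lab: "labeling V l" and P: "\<And>i. i \<in> {1..k} \<Longrightarrow> simple_perm_graph V (E i) l (\<pi> i)"
    unfolding complete_edge_colored_perm_graph_def by blast
  have D: "\<forall>i\<in>{1..k}. \<forall>j\<in>{1..k}. i \<noteq> j \<longrightarrow> E i \<inter> E j = {}"
    using assms(1) unfolding complete_edge_colored_def by blast
  have inj: "inj_on l V" using lab unfolding labeling_def bij_betw_def by blast
  obtain x y z a b c where xyz: "x \<in> V" "y \<in> V" "z \<in> V" "x \<noteq> y" "y \<noteq> z" "x \<noteq> z"
    and abc: "a \<in> {1..k}" "b \<in> {1..k}" "c \<in> {1..k}" "a \<noteq> b" "b \<noteq> c" "a \<noteq> c"
    and E: "{x, y} \<in> E a" "{y, z} \<in> E b" "{x, z} \<in> E c"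
    using assms(2) unfolding has_rainbow_triangle_def by blast
  have ne: "l x \<noteq> l y" "l y \<noteq> l z" "l x \<noteq> l z" using inj xyz by (auto dest: inj_onD)
  have c1: "{y,x} \<in> E a" "{z,y} \<in> E b" "{z,x} \<in> E c" using E by (auto simp: insert_commute)
  note cc = core2[OF P D]
  consider "l x < l y" "l y < l z" | "l x < l z" "l z < l y" | "l y < l x" "l x < l z"
    | "l y < l z" "l z < l x" | "l z < l x" "l x < l y" | "l z < l y" "l y < l x"
    using ne by linarith
  then show False
  proof cases
    case 1 then show ?thesis using cc[of x y z c a b] xyz abc E c1 by metis
  next
    case 2 then show ?thesis using cc[of x z y a c b] xyz abc E c1 by metis
  next
    case 3 then show ?thesis using cc[of y x z b a c] xyz abc E c1 by metis
  next
    case 4 then show ?thesis using cc[of y z x a b c] xyz abc E c1 by metis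
  next
    case 5 then show ?thesis using cc[of z x y b c a] xyz abc E c1 by metis
  next
    case 6 then show ?thesis using cc[of z y x c b a] xyz abc E c1 by metis
  qed
qed

end
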